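(* Let $x\geq0$ and $h\in\mathbb{R}$ satisfy $|h|\leq\frac{1}{3\max\{x,1\}}$. Then \[\exp(-3|h|\max\{x,1\})\leq\frac{1-\Phi(x+h)}{1-\Phi(x)}\leq\exp(3|h|\max\{x,1\}).\]
   Context: $\Phi(x):=\int_{-\infty}^x\frac{e^{-t^2/2}}{\sqrt{2\pi}}dt$ is the standard Gaussian c.d.f. *)

theory Defs
  imports "HOL-Probability.Probability"
begin

definition Phi :: "real \<Rightarrow> real" where
  "Phi x = (LBINT t:{..x}. exp (- t\<^sup>2 / 2) / sqrt (2 * pi))"

end

theory Submission imports Defs begin

definition gd :: "real \<Rightarrow> real" where "gd t = exp (- t\<^sup>2 / 2) / sqrt (2 * pi)"

lemma gd_std: "gd = std_normal_density"
  by (rule ext) (simp add: gd_def normal_density_def)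

lemma gd_pos: "gd t > 0" by (simp add: gd_def)

lemma gd_int: "integrable lborel gd"
  using integrable_std_normal_moment[of 0] by (simp add: gd_std)

lemma gd_total: "integral\<^sup>L lborel gd = 1"
  using std_normal_moment_even[of 0] by (simp add: gd_std)

lemma gd_setint: "set_integrable lborel A gd" if "A \<in> sets borel"
  unfolding set_integrable_def using integrable_mult_indicator[OF _ gd_int] that by simp

lemma Phi_gd: "Phi x = (LBINT t:{..x}. gd t)"
  by (simp add: Phi_def gd_def)

lemma Phi_le1: "Phi x \<le> 1"
proof -
  have "(LBINT t:{..x}. gd t) \<le> integral\<^sup>L lborel gd"
    unfolding set_lebesgue_integral_def
    by (rule integral_mono[OF integrable_mult_indicator[OF _ gd_int] gd_int])
       (auto simp: indicator_def less_imp_le[OF gd_pos])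
  then show ?thesis using gd_total Phi_gd by simp
qed

lemma Phi_split: assumes "c \<le> x" shows "Phi x = (LBINT t:{..<c}. gd t) + integral {c..x} gd"
proof -
  have "{..x} = {..<c} \<union> {c..x}" using assms by auto
  then have "Phi x = (LBINT t:{..<c}. gd t) + (LBINT t:{c..x}. gd t)"
    unfolding Phi_gd by (simp only:) (rule set_integral_Un, force, (rule gd_setint, simp)+)
  also have "(LBINT t:{c..x}. gd t) = integral {c..x} gd"
    by (rule set_borel_integral_eq_integral(2)[OF gd_setint]) simp
  finally show ?thesis .
qed

lemma gd_cont: "continuous_on S gd" unfolding gd_def by (intro continuous_intros) auto

lemma Phi_deriv: "(Phi has_real_derivative gd x) (at x)"
proof -
  let ?c = "x - 1" and ?b = "x + 1"
  have "((\<lambda>u. integral {?c..u} gd) has_real_derivative gd x) (at x within {?c..?b})"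
    by (rule integral_has_real_derivative[OF gd_cont]) auto
  then have "((\<lambda>u. integral {?c..u} gd) has_real_derivative gd x) (at x within {?c<..<?b})"
    by (rule has_field_derivative_subset) auto
  then have "((\<lambda>u. integral {?c..u} gd) has_real_derivative gd x) (at x)"
    using at_within_open[of x "{?c<..<?b}"] by simp
  then have "((\<lambda>u. (LBINT t:{..<?c}. gd t) + integral {?c..u} gd) has_real_derivative gd x) (at x)"
    by (auto intro!: derivative_eq_intros)
  then show ?thesis
    by (rule has_field_derivative_transform_within_open[where S="{?c<..}"]) (auto intro!: Phi_split[symmetric])
qed

definition Q :: "real \<Rightarrow> real" where "Q t = 1 - Phi t"

lemma Q_deriv: "(Q has_real_derivative - gd t) (at t)"
  unfolding Q_def by (auto intro!: derivative_eq_intros Phi_deriv)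

lemma Q_nonneg: "Q t \<ge> 0" using Phi_le1 by (simp add: Q_def)

lemma Q_anti: assumes "a \<le> b" shows "Q b \<le> Q a"
  by (rule DERIV_nonpos_imp_nonincreasing[OF assms]) (use Q_deriv gd_pos less_imp_le in \<open>force\<close>)

lemma gd_le: "gd t \<le> 1 / sqrt (2 * pi)"
  unfolding gd_def by (intro divide_right_mono) auto

lemma gd_le1: "gd t \<le> 1"
proof -
  have "1 \<le> sqrt (2 * pi)" using pi_gt3 by (simp add: real_le_rsqrt)
  then show ?thesis using gd_le[of t] by (smt (verit) divide_le_eq_1)
qed

lemma gd_deriv: "(gd has_real_derivative - t * gd t) (at t)"
  unfolding gd_def by (auto intro!: derivative_eq_intros simp: field_simps power2_eq_square)

lemma psi_deriv: "((\<lambda>t. gd t * t / (t\<^sup>2 + 1)) has_real_derivative gd t * (2 / (t\<^sup>2 + 1)\<^sup>2 - 1)) (at t)"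
proof -
  have ne: "t\<^sup>2 + 1 \<noteq> 0" by (smt (verit) zero_le_power2)
  have ne2: "(t\<^sup>2 + 1)\<^sup>2 \<noteq> 0" using ne by simp
  have g: "((\<lambda>t. t\<^sup>2 + 1) has_real_derivative 2 * t) (at t)"
    by (auto intro!: derivative_eq_intros)
  have d: "((\<lambda>t. gd t * t / (t\<^sup>2 + 1)) has_real_derivative
     ((- t * gd t * t + 1 * gd t) * (t\<^sup>2 + 1) - gd t * t * (2 * t)) / ((t\<^sup>2 + 1) * (t\<^sup>2 + 1))) (at t)"
    by (rule DERIV_divide[OF DERIV_mult[OF gd_deriv DERIV_ident] g ne])
  have "((- t * gd t * t + 1 * gd t) * (t\<^sup>2 + 1) - gd t * t * (2 * t)) / ((t\<^sup>2 + 1) * (t\<^sup>2 + 1))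
      = gd t * (2 - (t\<^sup>2 + 1)\<^sup>2) / (t\<^sup>2 + 1)\<^sup>2"
    by (simp add: power2_eq_square algebra_simps)
  also have "\<dots> = gd t * (2 / (t\<^sup>2 + 1)\<^sup>2 - 1)"
    using ne2 by (simp add: field_simps)
  finally show ?thesis using d by simp
qed

lemma Mills: assumes "z \<ge> 0" shows "gd z * z / (z\<^sup>2 + 1) \<le> Q z"
proof (rule ccontr)
  define D where "D t = Q t - gd t * t / (t\<^sup>2 + 1)" for t
  assume "\<not> ?thesis"
  then have Dz: "D z < 0" by (simp add: D_def)
  define b where "b = max (z + 1) (- 2 / D z)"
  have b1: "b \<ge> 1" "b \<ge> z" "b \<ge> - 2 / D z" using assms by (auto simp: b_def)
  have "D b \<le> D z"
  proof (rule DERIV_nonpos_imp_nonincreasing[OF b1(2)])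
    fix t
    have "(D has_real_derivative (- gd t - gd t * (2 / (t\<^sup>2 + 1)\<^sup>2 - 1))) (at t)"
      unfolding D_def[abs_def] by (intro derivative_intros Q_deriv psi_deriv)
    moreover have "- gd t - gd t * (2 / (t\<^sup>2 + 1)\<^sup>2 - 1) \<le> 0"
      using gd_pos[of t] by (simp add: algebra_simps)
    ultimately show "\<exists>y. (D has_real_derivative y) (at t) \<and> y \<le> 0" by blast
  qed
  moreover have "gd b * b / (b\<^sup>2 + 1) \<le> 1 / b"
  proof -
    have "gd b * b / (b\<^sup>2 + 1) \<le> b / (b\<^sup>2 + 1)"
      using gd_le1[of b] b1 by (intro divide_right_mono) (auto intro: mult_left_le_one_le simp: mult.commute)
    also have "\<dots> \<le> 1 / b" using b1(1) add_pos_nonneg[of 1 "b*b"] by (simp add: divide_simps power2_eq_square)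
    finally show ?thesis .
  qed
  then have "D b \<ge> - 1 / b" using Q_nonneg[of b] by (simp add: D_def)
  moreover have "- 1 / b > D z"
  proof -
    have "b > 0" using b1 by simp
    have "- 2 / D z \<le> b" by (rule b1(3))
    then have "- 2 \<ge> b * D z" using Dz neg_divide_le_eq[of "D z" "-2" b] by simp
    then show ?thesis using \<open>b > 0\<close> Dz by (simp add: field_simps)
  qed
  ultimately show False by simp
qed


lemma Q_pos: "Q t > 0"
proof -
  have "0 < gd 1 * 1 / (1\<^sup>2 + 1)" using gd_pos[of 1] by simp
  also have "\<dots> \<le> Q 1" by (rule Mills) simp
  finally have "Q 1 > 0" .
  moreover have "Q (max t 1) \<le> Q t" by (rule Q_anti) simp
  moreover have "Q (max t 1) > 0"
  proof -
    let ?m = "max t 1"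
    have "0 < gd ?m * ?m / (?m\<^sup>2 + 1)" using gd_pos[of ?m] by (simp add: add_pos_nonneg)
    also have "\<dots> \<le> Q ?m" by (rule Mills) simp
    finally show ?thesis .
  qed
  ultimately show ?thesis by simp
qed

lemma lam_bound:
  fixes x t :: real
  assumes x: "x \<ge> 0" and t: "t \<le> x + 1 / (3 * max x 1)"
  shows "gd t \<le> 3 * max x 1 * Q t"
proof -
  define M where "M = max x 1"
  have M1: "M \<ge> 1" "M \<ge> x" by (auto simp: M_def)
  have tM: "t \<le> x + 1/3"
  proof -
    have "1 / (3 * max x 1) \<le> 1 / 3" using M1 by (simp add: M_def divide_simps)
    then show ?thesis using t by linarith
  qed
  have QT: "0 \<le> Q t" by (rule Q_nonneg)
  show ?thesis
  proof (cases "t \<le> 1/2")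
    case True
    have "gd t \<le> 1 / sqrt (2 * pi)" by (rule gd_le)
    also have "\<dots> \<le> 3 * (2/5 * gd (1/2))"
    proof -
      have "exp (- (1/2)\<^sup>2 / 2) \<ge> 1 + (- (1/2)\<^sup>2 / 2 :: real)" by (rule exp_ge_add_one_self)
      then have "exp (- (1/2)\<^sup>2 / 2) \<ge> (7/8 :: real)" by (simp add: power2_eq_square)
      then show ?thesis unfolding gd_def by (simp add: divide_simps)
    qed
    also have "2/5 * gd (1/2) = gd (1/2) * (1/2) / ((1/2)\<^sup>2 + 1)" by (simp add: power2_eq_square)
    also have "\<dots> \<le> Q (1/2)" by (rule Mills) simp
    also have "\<dots> \<le> Q t" by (rule Q_anti) (rule True)
    finally have "gd t \<le> 3 * Q t" by simp
    also have "\<dots> \<le> 3 * M * Q t" using M1 QT by (simp add: mult_right_mono)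
    finally show ?thesis by (simp add: M_def)
  next
    case False
    then have t0: "t > 0" "t \<ge> 1/2" by auto
    have "gd t * t / (t\<^sup>2 + 1) \<le> Q t" by (rule Mills) (use t0 in auto)
    moreover have "0 < t\<^sup>2 + 1" by (smt (verit) zero_le_power2)
    ultimately have A: "gd t * t \<le> Q t * (t\<^sup>2 + 1)" by (simp add: divide_simps)
    have B: "t\<^sup>2 + 1 \<le> 3 * M * t"
    proof (cases "t \<le> 2")
      case True
      have "(2 - t) * (t - 1/2) \<ge> 0" using True t0 by (intro mult_nonneg_nonneg) auto
      moreover have "(2 - t) * (t - 1/2) = - (t * t) + 5/2 * t - 1" by (simp add: field_simps)
      ultimately have "t\<^sup>2 + 1 \<le> 3 * t" using t0 unfolding power2_eq_square by linarith
      also have "\<dots> \<le> 3 * M * t" using M1 t0 by simp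
      finally show ?thesis .
    next
      case False
      have "t + 1/2 \<le> 3 * M" using tM M1 by simp
      then have "t * (t + 1/2) \<le> t * (3 * M)" using t0 by (simp add: mult_left_mono)
      moreover have "t\<^sup>2 + 1 \<le> t * (t + 1/2)" using False by (simp add: power2_eq_square algebra_simps)
      ultimately show ?thesis by (simp add: algebra_simps)
    qed
    have "gd t * t \<le> 3 * M * Q t * t"
      using A mult_left_mono[OF B QT] by (simp add: algebra_simps)
    then show ?thesis using t0 by (simp add: M_def)
  qed
qed


lemma lnQ_deriv: "((\<lambda>t. ln (Q t)) has_real_derivative (- gd t / Q t)) (at t)"
  using Q_pos[of t] by (auto intro!: derivative_eq_intros Q_deriv simp: field_simps)

lemma lnQ_step:
  fixes x a b :: real
  assumes x: "x \<ge> 0" and ab: "a < b" and b: "b \<le> x + 1 / (3 * max x 1)"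
  shows "0 \<le> ln (Q a) - ln (Q b) \<and> ln (Q a) - ln (Q b) \<le> (b - a) * (3 * max x 1)"
proof -
  obtain z where z: "a < z" "z < b" "ln (Q b) - ln (Q a) = (b - a) * (- gd z / Q z)"
    using MVT2[OF ab, of "\<lambda>t. ln (Q t)" "\<lambda>t. - gd t / Q t"] lnQ_deriv by blast
  have "gd z \<le> 3 * max x 1 * Q z" by (rule lam_bound[OF x]) (use z b in linarith)
  then have r: "gd z / Q z \<le> 3 * max x 1" using Q_pos[of z] by (simp add: divide_simps)
  have r0: "0 \<le> gd z / Q z" using Q_pos[of z] gd_pos[of z] by simp
  have e: "ln (Q a) - ln (Q b) = (b - a) * (gd z / Q z)" using z(3) by (simp add: algebra_simps)
  show ?thesis unfolding e using mult_left_mono[OF r, of "b - a"] mult_nonneg_nonneg[OF _ r0, of "b - a"] ab by simp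
qed

theorem propositionA2:
  fixes x h :: real
  assumes "x \<ge> 0"
    and "\<bar>h\<bar> \<le> 1 / (3 * max x 1)"
  shows "exp (- 3 * \<bar>h\<bar> * max x 1) \<le> (1 - Phi (x + h)) / (1 - Phi x)
       \<and> (1 - Phi (x + h)) / (1 - Phi x) \<le> exp (3 * \<bar>h\<bar> * max x 1)"
proof -
  let ?d = "ln (Q (x + h)) - ln (Q x)"
  have key: "- 3 * \<bar>h\<bar> * max x 1 \<le> ?d \<and> ?d \<le> 3 * \<bar>h\<bar> * max x 1"
  proof (cases h "0::real" rule: linorder_cases)
    case less
    have "0 \<le> ln (Q (x + h)) - ln (Q x) \<and> ln (Q (x + h)) - ln (Q x) \<le> (x - (x + h)) * (3 * max x 1)"
      by (rule lnQ_step[OF assms(1)]) (use less in auto)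
    then show ?thesis using less by (simp add: algebra_simps)
  next
    case equal then show ?thesis by simp
  next
    case greater
    have "0 \<le> ln (Q x) - ln (Q (x + h)) \<and> ln (Q x) - ln (Q (x + h)) \<le> (x + h - x) * (3 * max x 1)"
      by (rule lnQ_step[OF assms(1)]) (use greater assms(2) in auto)
    then show ?thesis using greater by (simp add: algebra_simps)
  qed
  have ratio: "(1 - Phi (x + h)) / (1 - Phi x) = exp ?d"
    using Q_pos[of x] Q_pos[of "x + h"] by (simp add: exp_diff Q_def)
  show ?thesis unfolding ratio using key by simp
qed

end
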